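(* For every graph $G$ and every positive integer $n \ge 2$, \[ \chi_n(G)\le\begin{cases}\left\lceil \dfrac{\tau(G)-n}{\lceil (2n+2)/3\rceil}\right\rceil+1 & \text{if } 2\le n\le \tau(G),\\ 1 & \text{if } n>\tau(G).\end{cases} \]
   Context: All graphs are finite and simple. The order of a path is its number of vertices, and $\tau(G)$ is the order of a longest path in $G$. For a positive integer $n$, an $n$-detour colouring of $G$ is a colouring of the vertices of $G$ such that no path of order greater than $n$ in $G$ has all its vertices of the same colour (equivalently, each colour class induces a subgraph with no path of order greater than $n$). The $n$th detour chromatic number $\chi_n(G)$ is the minimum number of colours in an $n$-detour colouring of $G$. *)

theory Defs
  imports Complex_Main
begin

definition simple_graph :: "'a set \<Rightarrow> ('a \<Rightarrow> 'a \<Rightarrow> bool) \<Rightarrow> bool" where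
  "simple_graph V E \<longleftrightarrow> finite V \<and> (\<forall>u v. E u v \<longrightarrow> u \<in> V \<and> v \<in> V)
     \<and> (\<forall>u v. E u v \<longrightarrow> E v u) \<and> (\<forall>v. \<not> E v v)"

text \<open>A path in G given as the list of its (distinct) vertices; its order is its length.\<close>

definition is_path :: "'a set \<Rightarrow> ('a \<Rightarrow> 'a \<Rightarrow> bool) \<Rightarrow> 'a list \<Rightarrow> bool" where
  "is_path V E p \<longleftrightarrow> p \<noteq> [] \<and> distinct p \<and> set p \<subseteq> V
     \<and> (\<forall>i. Suc i < length p \<longrightarrow> E (p ! i) (p ! Suc i))"

definition tau :: "'a set \<Rightarrow> ('a \<Rightarrow> 'a \<Rightarrow> bool) \<Rightarrow> nat" where
  "tau V E = Max (insert 0 {length p | p. is_path V E p})"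

definition detour_colouring :: "'a set \<Rightarrow> ('a \<Rightarrow> 'a \<Rightarrow> bool) \<Rightarrow> nat \<Rightarrow> nat \<Rightarrow> ('a \<Rightarrow> nat) \<Rightarrow> bool" where
  "detour_colouring V E n k c \<longleftrightarrow> (\<forall>v\<in>V. c v < k)
     \<and> (\<forall>p. is_path V E p \<and> length p > n \<longrightarrow> \<not> (\<forall>v\<in>set p. c v = c (hd p)))"

definition detour_chromatic :: "'a set \<Rightarrow> ('a \<Rightarrow> 'a \<Rightarrow> bool) \<Rightarrow> nat \<Rightarrow> nat" where
  "detour_chromatic V E n = (LEAST k. \<exists>c. detour_colouring V E n k c)"

end

theory Submission
  imports Defs
begin

lemma ar0: fixes n m :: nat
  assumes "3*m \<le> 2*n+4" "2 \<le> n" shows "m \<le> n"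
proof (cases "n \<ge> 4")
  case True thus ?thesis using assms by linarith
next
  case False
  hence "n = 2 \<or> n = 3" using assms by linarith
  thus ?thesis using assms by auto
qed
lemma ar1: fixes n m a b d1 d2 :: nat
  assumes "2*n+2 \<le> 3*m" "3*m \<le> 2*n+4" "2 \<le> n" "n \<le> a+b" "b \<le> a" "n \<le> d1+d2" "d2 \<le> d1"
  shows "m \<le> a + d1"
proof -
  have "m \<le> n"
  proof (cases "n \<ge> 4")
    case True thus ?thesis using assms by linarith
  next
    case False
    hence "n = 2 \<or> n = 3" using assms by linarith
    thus ?thesis using assms by auto
  qed
  thus ?thesis using assms by linarith
qed
lemma ar2: fixes n m a b j :: nat
  assumes "2*n+2 \<le> 3*m" "3*m \<le> 2*n+4" "2 \<le> n" "n \<le> a+b" "b \<le> a" "j < b" "a+j+1<m"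
  shows "m \<le> a+b-j"
proof (rule ccontr)
  assume "\<not> ?thesis" hence "a + b < m + j" using assms by linarith
  thus False using assms by linarith
qed
lemma ar3: fixes n m a b d1 d2 j :: nat
  assumes "2*n+2 \<le> 3*m" "3*m \<le> 2*n+4" "2 \<le> n" "n \<le> a+b" "b \<le> a" "n \<le> d1+d2" "d2 \<le> d1" "d1 < m"
   "j < a" "b+j+1<m" "b+a-j<m"
  shows "m \<le> a+d2"
proof -
  have "b + a < m + j" using assms by linarith
  thus ?thesis using assms by linarith
qed
lemma ar4: fixes n m a b j1 j2 :: nat
  assumes "2*n+2 \<le> 3*m" "3*m \<le> 2*n+4" "2 \<le> n" "n \<le> a+b" "b \<le> a" "a < m"
   "j1 < a" "b+j1+1<m" "b+a-j1<m" "j2 < a" "b+j2+1<m" "b+a-j2<m" 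
  shows "j1 = j2"
proof -
  have "b + a < m + j1" "b + a < m + j2" using assms by linarith+
  thus ?thesis using assms by linarith
qed


definition okp :: "('a \<Rightarrow> 'a \<Rightarrow> bool) \<Rightarrow> 'a list \<Rightarrow> bool" where
  "okp E p \<longleftrightarrow> distinct p \<and> successively E p"

lemma is_path_okp: "is_path U E p \<longleftrightarrow> p \<noteq> [] \<and> okp E p \<and> set p \<subseteq> U"
  unfolding is_path_def okp_def successively_conv_nth by auto

lemma okp_append: "okp E (xs @ ys) \<longleftrightarrow> okp E xs \<and> okp E ys \<and> set xs \<inter> set ys = {}
   \<and> (xs = [] \<or> ys = [] \<or> E (last xs) (hd ys))"
  unfolding okp_def by (auto simp: successively_append_iff)

lemma okp_Cons: "okp E (x # xs) \<longleftrightarrow> x \<notin> set xs \<and> okp E xs \<and> (xs = [] \<or> E x (hd xs))"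
  unfolding okp_def by (auto simp: successively_Cons)

lemma okp_rev: assumes "\<And>u v. E u v \<Longrightarrow> E v u" shows "okp E (rev xs) \<longleftrightarrow> okp E xs"
proof -
  have "(\<lambda>x y. E y x) = E" using assms by (auto intro!: ext)
  thus ?thesis unfolding okp_def by (metis distinct_rev successively_rev)
qed

lemma okp_take: "okp E xs \<Longrightarrow> okp E (take i xs)"
  using okp_append[of E "take i xs" "drop i xs"] by simp

lemma okp_drop: "okp E xs \<Longrightarrow> okp E (drop i xs)"
  using okp_append[of E "take i xs" "drop i xs"] by simp

lemma okp_single[simp]: "okp E [x]" unfolding okp_def by simp
lemma okp_Nil[simp]: "okp E []" unfolding okp_def by simp

definition arm :: "('a \<Rightarrow> 'a \<Rightarrow> bool) \<Rightarrow> 'a set \<Rightarrow> 'a \<Rightarrow> 'a list \<Rightarrow> bool" where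
  "arm E A v X \<longleftrightarrow> okp E X \<and> set X \<subseteq> A \<and> (X \<noteq> [] \<longrightarrow> E v (hd X))"

lemma build:
  assumes sym: "\<And>u v. E u v \<Longrightarrow> E v u"
  and okq: "okp E (P @ D' @ [q])" and P: "P \<noteq> []"
  and Y: "okp E Y" "Y \<noteq> []" "hd Y = q"
  and X: "arm E A (hd P) X"
  and dj: "set X \<inter> set P = {}" "set X \<inter> set D' = {}" "set X \<inter> set Y = {}"
     "set Y \<inter> set P = {}" "set Y \<inter> set D' = {}"
  shows "okp E (rev X @ P @ D' @ Y)"
proof -
  have 1: "okp E (P @ D')" "E (last (P @ D')) q"
    using okq[unfolded append_assoc[symmetric]] okp_append[of E "P @ D'" "[q]"] P by auto
  have 2: "okp E ((P @ D') @ Y)"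
    using 1 Y dj unfolding okp_append[of E "P @ D'" Y] by (cases Y) auto
  have 3: "okp E (rev X)" using X okp_rev[of E X] sym unfolding arm_def by blast
  have 4: "X \<noteq> [] \<Longrightarrow> E (last (rev X)) (hd (P @ D' @ Y))"
    using X P sym unfolding arm_def by (simp add: last_rev)
  show ?thesis using 2 3 4 dj unfolding okp_append[of E "rev X"] by auto
qed

lemma set_take_nth: "x \<in> set (take s D) \<Longrightarrow> \<exists>i<s. i < length D \<and> D!i = x"
  by (auto simp: in_set_conv_nth)

lemma hit_side:
  assumes sym: "\<And>u v. E u v \<Longrightarrow> E v u"
  and P: "okp E P" "P \<noteq> []" "set P \<subseteq> B"
  and AB: "A \<inter> B = {}"
  and X: "arm E A (hd P) X" and Z: "arm E A (hd P) Z" and XZ: "set X \<inter> set Z = {}"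
  and D: "arm E A (last P) D"
  and s: "s < length D" and j: "j < length Z" and q: "D!s = Z!j"
  and before: "\<forall>i<s. D!i \<notin> set X \<union> set Z"
  and H: "\<And>p. is_path (A \<union> B) E p \<Longrightarrow> length p < length P + m"
  shows "length X + j + 1 < m \<and> length X + length Z - j < m"
proof -
  define D' where "D' = take s D"
  have PD: "okp E (P @ D)"
    using P D AB s unfolding okp_append arm_def by (cases D) auto
  have "take (length P + Suc s) (P @ D) = P @ D' @ [Z!j]"
    using s q by (simp add: D'_def take_Suc_conv_app_nth)
  hence okq: "okp E (P @ D' @ [Z!j])" using okp_take[OF PD] by metis
  have D'sub: "set D' \<subseteq> A" using D set_take_subset[of s D] unfolding arm_def D'_def by blast
  have D'dis: "set D' \<inter> (set X \<union> set Z) = {}"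
  proof -
    { fix x assume "x \<in> set D'" "x \<in> set X \<union> set Z"
      then obtain i where "i < s" "D!i = x" using set_take_nth[of x s D] D'_def by auto
      with before \<open>x \<in> set X \<union> set Z\<close> have False by auto }
    thus ?thesis by blast
  qed
  have Xs: "set X \<subseteq> A" "set Z \<subseteq> A" using X Z unfolding arm_def by auto
  have okZ: "okp E Z" using Z unfolding arm_def by auto
  have gen: "length X + length Y < m"
    if Y: "okp E Y" "Y \<noteq> []" "hd Y = Z!j" "set Y \<subseteq> set Z" for Y
  proof -
    have "okp E (rev X @ P @ D' @ Y)"
      apply (rule build[OF sym okq P(2) Y(1,2,3) X])
      using D'dis XZ Y(4) AB P(3) Xs D'sub by blast+
    moreover have "set (rev X @ P @ D' @ Y) \<subseteq> A \<union> B"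
      using Xs P(3) D'sub Y(4) by auto
    ultimately have "is_path (A \<union> B) E (rev X @ P @ D' @ Y)"
      unfolding is_path_okp using P(2) by auto
    from H[OF this] show ?thesis by simp
  qed
  have "length X + length (rev (take (Suc j) Z)) < m"
  proof (rule gen)
    show "okp E (rev (take (Suc j) Z))" using okp_rev[of E "take (Suc j) Z"] sym okp_take[OF okZ] by blast
    show "hd (rev (take (Suc j) Z)) = Z ! j" using j by (simp add: take_Suc_conv_app_nth)
  qed (use j in \<open>auto dest: in_set_takeD\<close>)
  moreover have "length X + length (drop j Z) < m"
  proof (rule gen)
    show "okp E (drop j Z)" using okp_drop[OF okZ] by blast
    show "hd (drop j Z) = Z ! j" using j by (simp add: hd_drop_conv_nth)
  qed (use j in \<open>auto dest: in_set_dropD\<close>)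
  ultimately show ?thesis using j by simp
qed

lemma arm_hit:
  assumes sym: "\<And>u v. E u v \<Longrightarrow> E v u"
  and P: "okp E P" "P \<noteq> []" "set P \<subseteq> B"
  and AB: "A \<inter> B = {}"
  and L: "arm E A (hd P) L" and R: "arm E A (hd P) R" and LR: "set L \<inter> set R = {}"
  and D: "arm E A (last P) D"
  and H: "\<And>p. is_path (A \<union> B) E p \<Longrightarrow> length p < length P + m"
  shows "length L + length D < m
    \<or> (\<exists>j<length R. R!j \<in> set D \<and> length L + j + 1 < m \<and> length L + length R - j < m)
    \<or> (\<exists>j<length L. L!j \<in> set D \<and> length R + j + 1 < m \<and> length R + length L - j < m)"
proof (cases "set D \<inter> (set L \<union> set R) = {}")
  case True
  have PD: "okp E (P @ D)"
    using P D AB unfolding okp_append arm_def by (cases D) auto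
  have okL: "okp E (rev L)" using L okp_rev[of E L] sym unfolding arm_def by blast
  have "okp E (rev L @ (P @ D))"
    unfolding okp_append[of E "rev L"] using PD okL True L AB P(2,3) sym
    unfolding arm_def by (auto simp: last_rev)
  moreover have "set (rev L @ P @ D) \<subseteq> A \<union> B" using L D P(3) unfolding arm_def by auto
  ultimately have "is_path (A \<union> B) E (rev L @ P @ D)" unfolding is_path_okp using P(2) by auto
  from H[OF this] show ?thesis by simp
next
  case False
  then obtain x where "x \<in> set D" "x \<in> set L \<union> set R" by blast
  then obtain s0 where "s0 < length D \<and> D!s0 \<in> set L \<union> set R"
    by (metis in_set_conv_nth)
  then obtain s where s: "s < length D" "D!s \<in> set L \<union> set R"
    and before: "\<forall>i<s. \<not> (i < length D \<and> D!i \<in> set L \<union> set R)"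
    using exists_least_iff[of "\<lambda>s. s < length D \<and> D!s \<in> set L \<union> set R"] by blast
  have bef: "\<forall>i<s. D!i \<notin> set L \<union> set R" using before s(1) by auto
  have qD: "D!s \<in> set D" using s(1) by simp
  show ?thesis
  proof (cases "D!s \<in> set R")
    case True
    then obtain j where j: "j < length R" "R!j = D!s" by (auto simp: in_set_conv_nth)
    have "length L + j + 1 < m \<and> length L + length R - j < m"
      by (rule hit_side[OF sym P AB L R LR D s(1) j(1) j(2)[symmetric] bef H])
    thus ?thesis using j qD by auto
  next
    case False
    hence "D!s \<in> set L" using s by auto
    then obtain j where j: "j < length L" "L!j = D!s" by (auto simp: in_set_conv_nth)
    have bef': "\<forall>i<s. D!i \<notin> set R \<union> set L" using bef by auto
    have "length R + j + 1 < m \<and> length R + length L - j < m"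
      by (rule hit_side[OF sym P AB R L _ D s(1) j(1) j(2)[symmetric] bef' H]) (use LR in auto)
    thus ?thesis using j qD by auto
  qed
qed

lemma get_arms:
  assumes sym: "\<And>u v. E u v \<Longrightarrow> E v u"
  and noA: "\<And>p. is_path A E p \<Longrightarrow> length p \<le> n"
  and v: "v \<notin> A" and p: "is_path (insert v A) E p" and len: "n < length p"
  shows "\<exists>L R. arm E A v L \<and> arm E A v R \<and> set L \<inter> set R = {} \<and> n \<le> length L + length R
     \<and> length R \<le> length L"
proof -
  have "v \<in> set p"
  proof (rule ccontr)
    assume "v \<notin> set p"
    hence "is_path A E p" using p unfolding is_path_def by auto
    with noA len show False by fastforce
  qed
  then obtain xs ys where p_eq: "p = xs @ v # ys" by (meson split_list)
  have okp: "okp E p" "set p \<subseteq> insert v A" using p unfolding is_path_okp by auto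
  hence o1: "okp E xs" "okp E (v # ys)" "set xs \<inter> set (v # ys) = {}"
    "xs \<noteq> [] \<Longrightarrow> E (last xs) v"
    unfolding p_eq okp_append by auto
  hence o2: "v \<notin> set ys" "okp E ys" "ys \<noteq> [] \<Longrightarrow> E v (hd ys)" unfolding okp_Cons by auto
  have L0: "arm E A v (rev xs)" unfolding arm_def
    using o1 okp(2) okp_rev[of E xs] sym p_eq by (auto simp: hd_rev)
  have R0: "arm E A v ys" unfolding arm_def
    using o2 okp(2) p_eq by auto
  have dj: "set (rev xs) \<inter> set ys = {}" using o1 by auto
  have ln: "n \<le> length (rev xs) + length ys" using len p_eq by simp
  show ?thesis
  proof (cases "length ys \<le> length (rev xs)")
    case True thus ?thesis using L0 R0 dj ln by blast
  next
    case False thus ?thesis using L0 R0 dj ln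
      by (rule_tac x=ys in exI, rule_tac x="rev xs" in exI) auto
  qed
qed

lemma key:
  assumes sym: "\<And>u v. E u v \<Longrightarrow> E v u"
  and mm: "2*n+2 \<le> 3*m" "3*m \<le> 2*n+4" "2 \<le> n"
  and noA: "\<And>p. is_path A E p \<Longrightarrow> length p \<le> n"
  and maxA: "\<And>v. v \<in> B \<Longrightarrow> \<exists>p. is_path (insert v A) E p \<and> n < length p"
  and AB: "A \<inter> B = {}"
  and PB: "is_path B E P"
  shows "\<exists>p. is_path (A \<union> B) E p \<and> length P + m \<le> length p"
proof (rule ccontr)
  assume "\<not> ?thesis"
  hence H: "\<And>p. is_path (A \<union> B) E p \<Longrightarrow> length p < length P + m" by force
  have P: "okp E P" "P \<noteq> []" "set P \<subseteq> B" using PB unfolding is_path_okp by auto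
  have arms_of: "\<exists>L R. arm E A v L \<and> arm E A v R \<and> set L \<inter> set R = {} \<and> n \<le> length L + length R
     \<and> length R \<le> length L" if "v \<in> set P" for v
  proof -
    have "v \<in> B" "v \<notin> A" using that P AB by auto
    then obtain p where "is_path (insert v A) E p" "n < length p" using maxA by blast
    thus ?thesis using get_arms[where E=E, OF sym noA \<open>v \<notin> A\<close>] by blast
  qed
  obtain L R where L: "arm E A (hd P) L" and R: "arm E A (hd P) R" and LR: "set L \<inter> set R = {}"
    and nLR: "n \<le> length L + length R" and RL: "length R \<le> length L"
    using arms_of[of "hd P"] P(2) by auto
  have mn: "m \<le> n" using ar0 mm by blast
  have aL: "length L < m"
    using arm_hit[where E=E, OF sym P AB L R LR _ H, of "[]"] unfolding arm_def by auto
  show False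
  proof (cases "length P = 1")
    case True
    then obtain p1 where P1: "P = [p1]" by (cases P) auto
    have "okp E (rev L @ p1 # R)"
    proof -
      have "okp E (rev L)" using L okp_rev[of E L] sym unfolding arm_def by blast
      moreover have "okp E (p1 # R)" unfolding okp_Cons using R AB P(3) P1 unfolding arm_def by auto
      moreover have "set (rev L) \<inter> set (p1 # R) = {}" using LR L AB P(3) P1 unfolding arm_def by auto
      moreover have "L \<noteq> [] \<Longrightarrow> E (last (rev L)) p1" using L sym P1 unfolding arm_def by (auto simp: last_rev)
      ultimately show ?thesis unfolding okp_append[of E "rev L"] by auto
    qed
    moreover have "set (rev L @ p1 # R) \<subseteq> A \<union> B" using L R P(3) P1 unfolding arm_def by auto
    ultimately have "is_path (A \<union> B) E (rev L @ p1 # R)" unfolding is_path_okp by auto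
    from H[OF this] show False using nLR mn True by simp
  next
    case False
    have "last P \<in> set P" using P(2) by simp
    then obtain D1 D2 where D1: "arm E A (last P) D1" and D2: "arm E A (last P) D2"
      and D12: "set D1 \<inter> set D2 = {}"
      and nD: "n \<le> length D1 + length D2" and D21: "length D2 \<le> length D1"
      using arms_of by blast
    have Pr: "okp E (rev P)" "rev P \<noteq> []" "set (rev P) \<subseteq> B" using P okp_rev[of E P] sym by auto
    have H': "\<And>p. is_path (A \<union> B) E p \<Longrightarrow> length p < length (rev P) + m" using H by simp
    have hdr: "hd (rev P) = last P" using P(2) by (simp add: hd_rev)
    have dL: "length D1 < m"
      using arm_hit[where E=E, OF sym Pr AB _ _ D12 _ H', of "[]"] D1 D2 hdr unfolding arm_def by auto
    note h1 = arm_hit[where E=E, OF sym P AB L R LR D1 H]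
    note h2 = arm_hit[where E=E, OF sym P AB L R LR D2 H]
    have no1: "\<not> length L + length D1 < m" using ar1[OF mm nLR RL nD D21] by linarith
    have noR: "\<not> (\<exists>j<length R. R!j \<in> set D \<and> length L + j + 1 < m \<and> length L + length R - j < m)" for D
      using ar2[OF mm nLR RL] by fastforce
    from h1 no1 noR obtain j1 where j1: "j1 < length L" "L!j1 \<in> set D1" "length R + j1 + 1 < m"
      "length R + length L - j1 < m" by blast
    have no2: "\<not> length L + length D2 < m" using ar3[OF mm nLR RL nD D21 dL j1(1) j1(3) j1(4)] by linarith
    from h2 no2 noR obtain j2 where j2: "j2 < length L" "L!j2 \<in> set D2" "length R + j2 + 1 < m"
      "length R + length L - j2 < m" by blast
    have "j1 = j2" using ar4[OF mm nLR RL aL j1(1) j1(3) j1(4) j2(1) j2(3) j2(4)] .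
    thus False using j1(2) j2(2) D12 by auto
  qed
qed

lemma colour:
  assumes sym: "\<And>u v. E u v \<Longrightarrow> E v u"
  and mm: "2*n+2 \<le> 3*m" "3*m \<le> 2*n+4" "2 \<le> n"
  shows "finite U \<Longrightarrow> (\<forall>p. is_path U E p \<longrightarrow> length p \<le> n + j*m) \<Longrightarrow>
    \<exists>c. (\<forall>v\<in>U. c v \<le> j) \<and> (\<forall>p. is_path U E p \<and> n < length p \<longrightarrow> \<not>(\<forall>v\<in>set p. c v = c (hd p)))"
proof (induction j arbitrary: U)
  case 0
  thus ?case by (rule_tac x="\<lambda>_. 0" in exI) force
next
  case (Suc j)
  define AA where "AA = {A. A \<subseteq> U \<and> (\<forall>p. is_path A E p \<longrightarrow> length p \<le> n)}"
  have "finite AA" using Suc.prems(1) unfolding AA_def by (rule rev_finite_subset[OF finite_Pow_iff[THEN iffD2]]) auto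
  moreover have "{} \<in> AA" unfolding AA_def is_path_def by auto
  ultimately obtain A where A: "A \<in> AA" and Amax: "\<forall>b\<in>AA. A \<le> b \<longrightarrow> A = b"
    using finite_has_maximal[of AA] by blast
  have AU: "A \<subseteq> U" and noA: "\<And>p. is_path A E p \<Longrightarrow> length p \<le> n" using A unfolding AA_def by auto
  define B where "B = U - A"
  have maxA: "\<exists>p. is_path (insert v A) E p \<and> n < length p" if "v \<in> B" for v
  proof -
    have "insert v A \<notin> AA" using Amax that B_def by auto
    moreover have "insert v A \<subseteq> U" using that AU B_def by auto
    ultimately show ?thesis unfolding AA_def by (auto simp: not_le)
  qed
  have AB: "A \<inter> B = {}" and ABU: "A \<union> B = U" using AU B_def by auto
  have Bpaths: "\<forall>P. is_path B E P \<longrightarrow> length P \<le> n + j*m"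
  proof (intro allI impI)
    fix P assume "is_path B E P"
    from key[where E=E, OF sym mm noA maxA AB this] obtain p where
      "is_path (A \<union> B) E p" "length P + m \<le> length p" by blast
    with Suc.prems(2) ABU show "length P \<le> n + j*m" by fastforce
  qed
  from Suc.IH[of B] Bpaths Suc.prems(1) B_def obtain c' where
    c'1: "\<forall>v\<in>B. c' v \<le> j" and
    c'2: "\<forall>p. is_path B E p \<and> n < length p \<longrightarrow> \<not>(\<forall>v\<in>set p. c' v = c' (hd p))" by auto
  define c where "c v = (if v \<in> A then Suc j else c' v)" for v
  show ?case
  proof (rule exI[of _ c], intro conjI allI impI)
    show "\<forall>v\<in>U. c v \<le> Suc j" using c'1 B_def c_def by (simp add: le_Suc_eq)
  next
    fix p assume p: "is_path U E p \<and> n < length p"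
    show "\<not>(\<forall>v\<in>set p. c v = c (hd p))"
    proof
      assume mono: "\<forall>v\<in>set p. c v = c (hd p)"
      have hp: "hd p \<in> set p" using p unfolding is_path_def by auto
      show False
      proof (cases "hd p \<in> A")
        case True
        have "set p \<subseteq> A"
        proof
          fix v assume v: "v \<in> set p"
          show "v \<in> A"
          proof (rule ccontr)
            assume "v \<notin> A"
            hence "v \<in> B" using v p B_def unfolding is_path_def by auto
            with c'1 mono v True \<open>v \<notin> A\<close> show False unfolding c_def by fastforce
          qed
        qed
        hence "is_path A E p" using p unfolding is_path_def by auto
        with noA p show False by fastforce
      next
        case False
        have hB: "hd p \<in> B" using False hp p B_def unfolding is_path_def by auto
        have "set p \<subseteq> B"
        proof
          fix v assume v: "v \<in> set p"
          have "v \<notin> A"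
          proof
            assume "v \<in> A"
            with mono v False have "Suc j = c' (hd p)" unfolding c_def by fastforce
            with c'1 hB show False by fastforce
          qed
          thus "v \<in> B" using v p B_def unfolding is_path_def by auto
        qed
        hence pB: "is_path B E p" using p unfolding is_path_def by auto
        have "\<forall>v\<in>set p. c' v = c' (hd p)"
        proof
          fix v assume v: "v \<in> set p"
          hence "v \<notin> A" using \<open>set p \<subseteq> B\<close> AB by auto
          with mono v False show "c' v = c' (hd p)" unfolding c_def by fastforce
        qed
        with c'2 pB p show False by blast
      qed
    qed
  qed
qed

lemma tau_ge:
  assumes "finite V" "is_path V E p" shows "length p \<le> tau V E"
proof -
  have "{length p | p. is_path V E p} \<subseteq> {..card V}"
  proof
    fix x assume "x \<in> {length p | p. is_path V E p}"
    then obtain q where q: "x = length q" "is_path V E q" by auto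
    hence "length q = card (set q)" unfolding is_path_def by (simp add: distinct_card)
    also have "\<dots> \<le> card V" using q assms(1) unfolding is_path_def by (simp add: card_mono)
    finally show "x \<in> {..card V}" using q by simp
  qed
  hence "finite (insert 0 {length p | p. is_path V E p})" by (simp add: finite_subset)
  thus ?thesis unfolding tau_def using assms(2) by (intro Max_ge) auto
qed

theorem theorem1p28:
  fixes V :: "'a set" and E :: "'a \<Rightarrow> 'a \<Rightarrow> bool" and n :: nat
  assumes "simple_graph V E" and "n \<ge> 2"
  shows "real (detour_chromatic V E n) \<le>
    (if n \<le> tau V E
     then real_of_int (\<lceil>(real (tau V E) - real n) / real_of_int \<lceil>(2 * real n + 2) / 3\<rceil>\<rceil>) + 1
     else 1)"
proof -
  have sym: "\<And>u v. E u v \<Longrightarrow> E v u" and finV: "finite V"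
    using assms(1) unfolding simple_graph_def by auto
  define t where "t = tau V E"
  define ci where "ci = \<lceil>(2 * real n + 2) / 3\<rceil>"
  have c1: "(2 * real n + 2) / 3 \<le> real_of_int ci" unfolding ci_def by (rule le_of_int_ceiling)
  have c2: "real_of_int ci < (2 * real n + 2) / 3 + 1" unfolding ci_def using ceiling_correct[of "(2 * real n + 2) / 3"] by linarith
  have ci0: "ci \<ge> 1" using c1 assms(2) by simp
  define m where "m = nat ci"
  have mr: "real m = real_of_int ci" using ci0 unfolding m_def by simp
  have mm1: "2*n+2 \<le> 3*m"
  proof -
    have "real (2*n+2) \<le> real (3*m)" using c1 mr by simp
    thus ?thesis by linarith
  qed
  have mm2: "3*m \<le> 2*n+4"
  proof -
    have "real (3*m) < real (2*n+5)" using c2 mr by (simp add: field_simps)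
    thus ?thesis by linarith
  qed
  have m0: "m > 0" using ci0 m_def by simp
  define q where "q = \<lceil>(real t - real n) / real m\<rceil>"
  define j where "j = (if n \<le> t then nat q else 0)"
  have tj: "t \<le> n + j*m"
  proof (cases "n \<le> t")
    case True
    have "0 \<le> (real t - real n) / real m" using True m0 by simp
    hence q0: "q \<ge> 0" unfolding q_def by linarith
    have "(real t - real n) / real m \<le> real_of_int q" unfolding q_def by (rule le_of_int_ceiling)
    hence "real t - real n \<le> real_of_int q * real m" using m0 by (simp add: field_simps)
    also have "real_of_int q = real j" using True q0 unfolding j_def by simp
    finally have "real t \<le> real (n + j*m)" by simp
    thus ?thesis by linarith
  next
    case False thus ?thesis by simp
  qed
  have paths: "\<forall>p. is_path V E p \<longrightarrow> length p \<le> n + j*m"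
    using tau_ge[OF finV] tj t_def by (metis le_trans)
  obtain c where c1: "\<forall>v\<in>V. c v \<le> j"
    and c2: "\<forall>p. is_path V E p \<and> n < length p \<longrightarrow> \<not>(\<forall>v\<in>set p. c v = c (hd p))"
    using colour[where E=E, OF sym mm1 mm2 assms(2) finV paths] by blast
  have "detour_colouring V E n (Suc j) c"
    unfolding detour_colouring_def using c1 c2 by (auto simp: less_Suc_eq_le)
  hence dc: "detour_chromatic V E n \<le> Suc j"
    unfolding detour_chromatic_def by (intro Least_le) blast
  show ?thesis
  proof (cases "n \<le> t")
    case True
    have "0 \<le> (real t - real n) / real m" using True m0 by simp
    hence q0: "q \<ge> 0" unfolding q_def by linarith
    have "real (detour_chromatic V E n) \<le> real (Suc j)" using dc by linarith
    also have "\<dots> = real_of_int q + 1" using True q0 unfolding j_def by simp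
    finally have "real (detour_chromatic V E n) \<le> real_of_int q + 1" .
    moreover have "real_of_int \<lceil>(2 * real n + 2) / 3\<rceil> = real m" using mr ci_def by simp
    ultimately show ?thesis using True unfolding q_def t_def by simp
  next
    case False
    hence "j = 0" unfolding j_def by simp
    thus ?thesis using dc False t_def by simp
  qed
qed

end
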